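(* For every $n\in\mathbb{Z}_{\ge0}$ the following identity of polynomials in $x$ holds: $$\sum_{j=0}^{n}x^{j}\prod_{m=1}^{n-j}\Big(x-\frac1m\Big)=(n+1)\prod_{m=2}^{n+1}\Big(x-\frac1m\Big),$$ where empty products equal $1$. *)

theory Defs
  imports "HOL-Computational_Algebra.Polynomial"
begin

end

theory Submission
  imports Defs
begin

lemma key: "[:0,1:] * smult (of_nat (n+1)) Q + [:-1,1::rat:] * Q
   = smult (of_nat (Suc n+1)) ([:- 1 / of_nat (Suc n + 1), 1:] * Q)"
proof -
  have a: "smult (of_nat (Suc n+1)) [:- 1 / of_nat (Suc n + 1), 1::rat:] = [:-1, of_nat (n+2):]"
    by (simp add: field_simps)
  have b: "[:0,1:] * smult (of_nat (n+1)) Q + [:-1,1::rat:] * Q = [:-1, of_nat (n+2):] * Q"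
  proof -
    have 1: "[:0,1:] * smult (of_nat (n+1)) Q = [:0, of_nat (n+1)::rat:] * Q" by simp
    have 2: "[:0, of_nat (n+1)::rat:] + [:-1,1:] = [:-1, of_nat (n+2):]" by simp
    show ?thesis unfolding 1 2[symmetric] by (simp only: distrib_right)
  qed
  show ?thesis using a b by (metis mult_smult_left)
qed

theorem mainTheorem7:
  fixes n :: nat
  shows "(\<Sum>j=0..n. monom (1::rat) j * (\<Prod>m=1..n-j. [:- 1 / of_nat m, 1:]))
         = smult (of_nat (n+1)) (\<Prod>m=2..n+1. [:- 1 / of_nat m, 1:])"
proof (induction n)
  case 0
  then show ?case by simp
next
  case (Suc n)
  let ?f = "\<lambda>m::nat. [:- 1 / of_nat m, 1::rat:]"
  let ?Q = "\<Prod>m=2..n+1. ?f m"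
  have s: "(\<Sum>j=0..Suc n. monom (1::rat) j * (\<Prod>m=1..Suc n-j. ?f m))
     = (\<Prod>m=1..Suc n. ?f m) + [:0,1:] * (\<Sum>j=0..n. monom (1::rat) j * (\<Prod>m=1..n-j. ?f m))"
    apply (subst sum.atLeast0_atMost_Suc_shift)
    apply (simp add: sum_distrib_left monom_Suc mult.assoc)
    done
  have p: "(\<Prod>m=1..Suc n. ?f m) = [:-1,1:] * ?Q"
  proof -
    have "{1..Suc n} = insert 1 {2..Suc n}" by auto
    then show ?thesis by simp
  qed
  have q: "(\<Prod>m=2..Suc n+1. ?f m) = ?f (Suc n + 1) * ?Q"
  proof -
    have e: "{2..Suc n+1} = insert (Suc n+1) {2..n+1}" by auto
    show ?thesis unfolding e by (rule prod.insert) auto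
  qed
  show ?case
    unfolding s Suc p q using key[of n ?Q] by (simp add: algebra_simps)
qed

end
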